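(* Let $(x,y,z)\in E$ be a $C$ or $D$ representation class that is not a $\mathrm{Pin}(2)$ representation class. Then there exists $\gamma\in\Gamma$ such that $\gamma(x,y,z)$ is $S$-equivalent to one of the triples $$(\sqrt2,1,\sqrt2),\ (1,1,1),\ (-2s,2s,2s),\ (-2s,-2s,1),\ (2r,-2r,-2r),\ (2r,1,2r),\ (1,2r,1),\ (1,2s,-1),\ (1,2r,2s),$$ where $r=\frac{\sqrt5+1}{4}$ and $s=\frac{\sqrt5-1}{4}$.
   Context: $M$ is a torus with one boundary component; $\pi_1(M)$ is free on $X,Y$. $E=\operatorname{Hom}(\pi_1(M),\mathrm{SU}(2))/\mathrm{SU}(2)$ is identified via global coordinates $[\sigma]\mapsto(\operatorname{tr}\sigma(X),\operatorname{tr}\sigma(Y),\operatorname{tr}\sigma(XY))$ with $\{(x,y,z)\in[-2,2]^3:-2\le x^2+y^2+z^2-xyz-2\le2\}$. $\Gamma$ (mapping class group of $M$ fixing $\partial M$) acts on $E$, generated by $\tau_X(x,y,z)=(x,z,xz-y)$ and $\tau_Y(x,y,z)=(z,y,yz-x)$. Let $p:\mathrm{SU}(2)\to\mathrm{SO}(3)$ be the double cover; $C=p^{-1}(\text{rotation group of the cube})$ and $D=p^{-1}(\text{rotation group of the regular dodecahedron})$. In the quaternionic model ($1,\mathrm{i},\mathrm{j},\mathrm{k}$ = $\begin{pmatrix}1&0\\0&1\end{pmatrix},\begin{pmatrix}i&0\\0&-i\end{pmatrix},\begin{pmatrix}0&1\\-1&0\end{pmatrix},\begin{pmatrix}0&i\\i&0\end{pmatrix}$),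 $\mathrm{Pin}(2)=p^{-1}(\mathrm{O}(2))=\{\cos\theta+\sin\theta\,\mathrm{j}\}\cup\{\cos\theta\,\mathrm{k}+\sin\theta\,\mathrm{i}\}$. For a subgroup $G\subset\mathrm{SU}(2)$, a point of $E$ is a $G$ representation class if some representative takes values in $G$ (equivalently, in a conjugate of $G$). Two triples are $S$-equivalent if one is obtained from the other by a permutation of coordinates combined with changing the signs of an even number of coordinates. *)

theory Defs
  imports "HOL-Analysis.Analysis"
begin

type_synonym cmat2 = "complex^2^2"
type_synonym triple = "real \<times> real \<times> real"

definition mat2 :: "complex \<Rightarrow> complex \<Rightarrow> complex \<Rightarrow> complex \<Rightarrow> cmat2" where
  "mat2 a b c d = (\<chi> i j. if i = 1 then (if j = 1 then a else b) else (if j = 1 then c else d))"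

definition cadj :: "cmat2 \<Rightarrow> cmat2" where
  "cadj A = (\<chi> i j. cnj (A $ j $ i))"

definition SU2 :: "cmat2 set" where
  "SU2 = {A. A ** cadj A = mat 1 \<and> det A = 1}"

definition qI :: cmat2 where "qI = mat2 \<i> 0 0 (- \<i>)"
definition qJ :: cmat2 where "qJ = mat2 0 1 (-1) 0"
definition qK :: cmat2 where "qK = mat2 0 \<i> \<i> 0"

(* identification of R^3 with su(2) (pure quaternions) *)
definition emb3 :: "triple \<Rightarrow> cmat2" where
  "emb3 v = (case v of (a, b, c) \<Rightarrow>
     a *\<^sub>R qI + b *\<^sub>R qJ + c *\<^sub>R qK)"

(* p^{-1}(symmetry rotations of a polyhedron with vertex set V): p(A) acts on R^3 = su(2)
   by v \<mapsto> A v A^*; a rotation is a symmetry of the solid iff it permutes its vertices *)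
definition preimage_rot :: "triple set \<Rightarrow> cmat2 set" where
  "preimage_rot V = {A \<in> SU2. \<forall>v\<in>V. A ** emb3 v ** cadj A \<in> emb3 ` V}"

definition cube_vertices :: "triple set" where
  "cube_vertices = {(a, b, c). a \<in> {1, -1} \<and> b \<in> {1, -1} \<and> c \<in> {1, -1}}"

definition golden :: real where "golden = (1 + sqrt 5) / 2"

definition dodecahedron_vertices :: "triple set" where
  "dodecahedron_vertices = cube_vertices
     \<union> {(0, b, c) | b c. b \<in> {1/golden, -1/golden} \<and> c \<in> {golden, -golden}}
     \<union> {(a, b, 0) | a b. a \<in> {1/golden, -1/golden} \<and> b \<in> {golden, -golden}}
     \<union> {(a, 0, c) | a c. a \<in> {golden, -golden} \<and> c \<in> {1/golden, -1/golden}}"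

definition Cgrp :: "cmat2 set" where "Cgrp = preimage_rot cube_vertices"
definition Dgrp :: "cmat2 set" where "Dgrp = preimage_rot dodecahedron_vertices"

definition Pin2 :: "cmat2 set" where
  "Pin2 = {(cos \<theta>) *\<^sub>R mat 1 + (sin \<theta>) *\<^sub>R qJ | \<theta>. True}
        \<union> {(cos \<theta>) *\<^sub>R qK + (sin \<theta>) *\<^sub>R qI | \<theta>. True}"

definition Eset :: "triple set" where
  "Eset = {(x, y, z). x \<in> {-2..2} \<and> y \<in> {-2..2} \<and> z \<in> {-2..2} \<and>
            -2 \<le> x^2 + y^2 + z^2 - x*y*z - 2 \<and> x^2 + y^2 + z^2 - x*y*z - 2 \<le> 2}"

(* [sigma] has coordinates (tr sigma(X), tr sigma(Y), tr sigma(XY)); pi_1 is free on X, Y,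
   so a representation is determined by A = sigma(X), B = sigma(Y). Traces are conjugation
   invariant, so "some representative with values in a conjugate of G" is the same as
   "some representative with values in G". *)
definition rep_class_in :: "cmat2 set \<Rightarrow> triple \<Rightarrow> bool" where
  "rep_class_in G t \<longleftrightarrow> (\<exists>A\<in>G. \<exists>B\<in>G.
      trace A = complex_of_real (fst t) \<and> trace B = complex_of_real (fst (snd t)) \<and>
      trace (A ** B) = complex_of_real (snd (snd t)))"

definition tauX :: "triple \<Rightarrow> triple" where
  "tauX t = (case t of (x, y, z) \<Rightarrow> (x, z, x*z - y))"
definition tauY :: "triple \<Rightarrow> triple" where
  "tauY t = (case t of (x, y, z) \<Rightarrow> (z, y, y*z - x))"
definition tauX_inv :: "triple \<Rightarrow> triple" where
  "tauX_inv t = (case t of (x, y, z) \<Rightarrow> (x, x*y - z, y))"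
definition tauY_inv :: "triple \<Rightarrow> triple" where
  "tauY_inv t = (case t of (x, y, z) \<Rightarrow> (y*x - z, y, x))"

inductive_set Gamma :: "(triple \<Rightarrow> triple) set" where
  Gid: "id \<in> Gamma"
| GX: "g \<in> Gamma \<Longrightarrow> tauX \<circ> g \<in> Gamma"
| GY: "g \<in> Gamma \<Longrightarrow> tauY \<circ> g \<in> Gamma"
| GXi: "g \<in> Gamma \<Longrightarrow> tauX_inv \<circ> g \<in> Gamma"
| GYi: "g \<in> Gamma \<Longrightarrow> tauY_inv \<circ> g \<in> Gamma"

definition S_equiv :: "triple \<Rightarrow> triple \<Rightarrow> bool" where
  "S_equiv t u \<longleftrightarrow> (case t of (a, b, c) \<Rightarrow>
     \<exists>p \<in> {(a,b,c), (a,c,b), (b,a,c), (b,c,a), (c,a,b), (c,b,a)}.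
     \<exists>e1 e2 e3 :: real. e1 \<in> {1, -1} \<and> e2 \<in> {1, -1} \<and> e3 \<in> {1, -1} \<and> e1 * e2 * e3 = 1 \<and>
       u = (e1 * fst p, e2 * fst (snd p), e3 * snd (snd p)))"

end

theory Submission
  imports Defs
begin

lemma cmat2_eq_iff: "(M::cmat2) = N \<longleftrightarrow> M$1$1 = N$1$1 \<and> M$1$2 = N$1$2 \<and> M$2$1 = N$2$1 \<and> M$2$2 = N$2$2"
  by (auto simp: vec_eq_iff forall_2)

lemma mat2_entries[simp]: "mat2 a b c d $1$1 = a" "mat2 a b c d $1$2 = b"
  "mat2 a b c d $2$1 = c" "mat2 a b c d $2$2 = d"
  by (simp_all add: mat2_def)

lemma mat2_eta: "(M::cmat2) = mat2 (M$1$1) (M$1$2) (M$2$1) (M$2$2)"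
  by (simp add: cmat2_eq_iff)

lemma mat2_eq_iff: "mat2 a b c d = mat2 a' b' c' d' \<longleftrightarrow> a = a' \<and> b = b' \<and> c = c' \<and> d = d'"
  by (simp add: cmat2_eq_iff)

lemma mat2_mult: "mat2 a b c d ** mat2 a' b' c' d' = mat2 (a*a' + b*c') (a*b' + b*d') (c*a' + d*c') (c*b' + d*d')"
  by (simp add: cmat2_eq_iff matrix_matrix_mult_def sum_2)

lemma mat2_trace: "trace (mat2 a b c d) = a + d"
  by (simp add: trace_def sum_2)

lemma mat2_det: "det (mat2 a b c d) = a * d - b * c"
  by (simp add: det_2)

lemma mat2_cadj: "cadj (mat2 a b c d) = mat2 (cnj a) (cnj c) (cnj b) (cnj d)"
  by (simp add: cmat2_eq_iff cadj_def)

lemma mat2_one: "(mat 1 :: cmat2) = mat2 1 0 0 1"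
  by (simp add: cmat2_eq_iff mat_def)

lemma mat2_scaleR: "r *\<^sub>R mat2 a b c d = mat2 (r *\<^sub>R a) (r *\<^sub>R b) (r *\<^sub>R c) (r *\<^sub>R d)"
  by (simp add: cmat2_eq_iff)

lemma mat2_add: "mat2 a b c d + mat2 a' b' c' d' = mat2 (a+a') (b+b') (c+c') (d+d')"
  by (simp add: cmat2_eq_iff)

lemma su2_entries:
  fixes a b c d :: complex
  assumes n: "a * cnj a + b * cnj b = 1" and o: "a * cnj c + b * cnj d = 0" and dt: "a * d - b * c = 1"
  shows "d = cnj a" "c = - cnj b"
proof -
  have o': "cnj a * c + cnj b * d = 0" using arg_cong[OF o, of cnj] by simp
  have "cnj a = cnj a * (a * d - b * c)" using dt by simp
  also have "\<dots> = (a * cnj a) * d - b * (cnj a * c)" by (simp add: algebra_simps)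
  also have "cnj a * c = - cnj b * d" using o' by (simp add: eq_neg_iff_add_eq_0)
  finally have "cnj a = (a * cnj a + b * cnj b) * d" by (simp add: algebra_simps)
  then show "d = cnj a" using n by simp
  have "- cnj b = - cnj b * (a * d - b * c)" using dt by simp
  also have "\<dots> = - a * (cnj b * d) + (b * cnj b) * c" by (simp add: algebra_simps)
  also have "cnj b * d = - cnj a * c" using o' by (simp add: eq_neg_iff_add_eq_0 add.commute)
  finally have "- cnj b = (a * cnj a + b * cnj b) * c" by (simp add: algebra_simps)
  then show "c = - cnj b" using n by simp
qed

lemma SU2_form:
  assumes "A \<in> SU2"
  obtains p q u w where "A = mat2 (Complex p q) (Complex u w) (Complex (-u) w) (Complex p (-q))"
    "p^2 + q^2 + u^2 + w^2 = 1"
proof -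
  define a b c d where "a = A$1$1" "b = A$1$2" "c = A$2$1" "d = A$2$2"
  have A: "A = mat2 a b c d" using mat2_eta[of A] by (simp add: a_b_c_d_def)
  have m: "A ** cadj A = mat 1" "det A = 1" using assms by (auto simp: SU2_def)
  from m have e: "a * cnj a + b * cnj b = 1" "a * cnj c + b * cnj d = 0" "a * d - b * c = 1"
    unfolding A mat2_cadj mat2_mult mat2_one mat2_det mat2_eq_iff by auto
  note s = su2_entries[OF e]
  have "A = mat2 (Complex (Re a) (Im a)) (Complex (Re b) (Im b)) (Complex (- Re b) (Im b)) (Complex (Re a) (- Im a))"
    unfolding A s by (simp add: mat2_eq_iff complex_eq_iff)
  moreover have "(Re a)^2 + (Im a)^2 + (Re b)^2 + (Im b)^2 = 1"
    using arg_cong[OF e(1), of Re] by (simp add: power2_eq_square)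
  ultimately show ?thesis using that by blast
qed

definition Rm :: "real \<Rightarrow> real \<Rightarrow> real \<Rightarrow> real \<Rightarrow> triple \<Rightarrow> triple" where
  "Rm a b c d v = (case v of (x, y, z) \<Rightarrow>
     ((a*a+b*b-c*c-d*d)*x + 2*(b*c-a*d)*y + 2*(b*d+a*c)*z,
      2*(b*c+a*d)*x + (a*a-b*b+c*c-d*d)*y + 2*(c*d-a*b)*z,
      2*(b*d-a*c)*x + 2*(c*d+a*b)*y + (a*a-b*b-c*c+d*d)*z))"

lemma emb3_mat2: "emb3 (x, y, z) = mat2 (Complex 0 x) (Complex y z) (Complex (-y) z) (Complex 0 (-x))"
  by (simp add: emb3_def qI_def qJ_def qK_def mat2_scaleR mat2_add mat2_eq_iff complex_eq_iff)

lemma emb3_inj: "emb3 v = emb3 v' \<Longrightarrow> v = v'"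
  by (cases v; cases v') (simp add: emb3_mat2 mat2_eq_iff complex_eq_iff)

lemma conj_emb3:
  "mat2 (Complex p q) (Complex u w) (Complex (-u) w) (Complex p (-q)) ** emb3 v **
     cadj (mat2 (Complex p q) (Complex u w) (Complex (-u) w) (Complex p (-q))) = emb3 (Rm p q u w v)"
  by (cases v) (simp add: emb3_mat2 mat2_cadj mat2_mult Rm_def mat2_eq_iff complex_eq_iff algebra_simps)

type_synonym zc = "int \<times> int"
type_synonym zt = "zc \<times> zc \<times> zc"

fun zadd :: "zc \<Rightarrow> zc \<Rightarrow> zc" where "zadd (a,b) (c,d) = (a+c, b+d)"
fun zsub :: "zc \<Rightarrow> zc \<Rightarrow> zc" where "zsub (a,b) (c,d) = (a-c, b-d)"
fun zneg :: "zc \<Rightarrow> zc" where "zneg (a,b) = (-a, -b)"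
fun zmul :: "int \<Rightarrow> int \<Rightarrow> zc \<Rightarrow> zc \<Rightarrow> zc" where
  "zmul m n (a,b) (c,d) = (a*c + m*b*d, a*d + b*c + n*b*d)"
fun zev :: "real \<Rightarrow> zc \<Rightarrow> real" where "zev w (a,b) = of_int a + of_int b * w"
fun tev :: "real \<Rightarrow> zt \<Rightarrow> triple" where "tev w (a,b,c) = (zev w a, zev w b, zev w c)"

fun dotc :: "zt \<Rightarrow> zt \<Rightarrow> zc" where
  "dotc (a1,a2,a3) (b1,b2,b3) = zadd (zadd (zmul 1 1 a1 b1) (zmul 1 1 a2 b2)) (zmul 1 1 a3 b3)"
fun tadd :: "zt \<Rightarrow> zt \<Rightarrow> zt" where "tadd (a1,a2,a3) (b1,b2,b3) = (zadd a1 b1, zadd a2 b2, zadd a3 b3)"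
fun tsub :: "zt \<Rightarrow> zt \<Rightarrow> zt" where "tsub (a1,a2,a3) (b1,b2,b3) = (zsub a1 b1, zsub a2 b2, zsub a3 b3)"
fun tscal :: "zc \<Rightarrow> zt \<Rightarrow> zt" where "tscal k (a1,a2,a3) = (zmul 1 1 k a1, zmul 1 1 k a2, zmul 1 1 k a3)"
fun crossc :: "zt \<Rightarrow> zt \<Rightarrow> zt" where
  "crossc (a1,a2,a3) (b1,b2,b3) = (zsub (zmul 1 1 a2 b3) (zmul 1 1 a3 b2),
     zsub (zmul 1 1 a3 b1) (zmul 1 1 a1 b3), zsub (zmul 1 1 a1 b2) (zmul 1 1 a2 b1))"
definition detc :: "zt \<Rightarrow> zt \<Rightarrow> zt \<Rightarrow> zc" where "detc a b c = dotc a (crossc b c)"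
fun fst3 :: "zt \<Rightarrow> zc" where "fst3 (a,b,c) = a"
fun snd3 :: "zt \<Rightarrow> zc" where "snd3 (a,b,c) = b"
fun thd3 :: "zt \<Rightarrow> zc" where "thd3 (a,b,c) = c"

definition trc :: "zt \<Rightarrow> zt \<Rightarrow> zt \<Rightarrow> zc" where
  "trc w1 w2 w3 = zsub (zadd (fst3 (tadd w1 w2)) (snd3 (tadd w1 w3))) (thd3 (tadd w2 w3))"
definition v4c :: "zt \<Rightarrow> zt \<Rightarrow> zt \<Rightarrow> zt" where
  "v4c w1 w2 w3 = tsub (tscal (0,1) (tadd w1 w2)) (tscal (-1,1) (tadd w2 w3))"

definition Vcube :: "zt list" where
  "Vcube = [(a,b,c). a \<leftarrow> [(1,0),(-1,0)], b \<leftarrow> [(1,0),(-1,0)], c \<leftarrow> [(1,0),(-1,0)]]"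
definition Vdod :: "zt list" where
  "Vdod = Vcube @ [((0,0),b,c). b \<leftarrow> [(-1,1),(1,-1)], c \<leftarrow> [(0,1),(0,-1)]]
     @ [(a,b,(0,0)). a \<leftarrow> [(-1,1),(1,-1)], b \<leftarrow> [(0,1),(0,-1)]]
     @ [(a,(0,0),c). a \<leftarrow> [(0,1),(0,-1)], c \<leftarrow> [(-1,1),(1,-1)]]"

definition chkV :: "zt list \<Rightarrow> bool \<Rightarrow> zc list \<Rightarrow> bool" where
  "chkV V ex TR = (\<forall>c1\<in>set V. \<forall>c2\<in>set V. dotc c1 c2 = (-1,0) \<longrightarrow>
     (\<forall>c3\<in>set V. dotc c1 c3 = (-1,0) \<longrightarrow> dotc c2 c3 = (-1,0) \<longrightarrow> detc c1 c2 c3 = (4,0) \<longrightarrow>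
       (ex \<longrightarrow> v4c c1 c2 c3 \<in> set (map (tscal (2,0)) V)) \<longrightarrow> trc c1 c2 c3 \<in> set TR))"

lemma int_sq_prime:
  fixes k l p :: int
  assumes p: "prime p" and e: "k^2 = p * l^2"
  shows "l = 0"
  using e
proof (induction "nat \<bar>l\<bar>" arbitrary: k l rule: less_induct)
  case less
  show ?case
  proof (rule ccontr)
    assume l0: "l \<noteq> 0"
    have "p dvd k^2" using less.prems by simp
    then have "p dvd k" using p prime_dvd_power by blast
    then obtain k1 where k1: "k = p * k1" by (auto simp: dvd_def)
    have "p * (p * k1^2) = p * l^2" using less.prems k1 by (simp add: power2_eq_square algebra_simps)
    then have e2: "p * k1^2 = l^2" using p by (simp add: prime_gt_0_int)
    then have "p dvd l^2" by (metis dvd_triv_left)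
    then have "p dvd l" using p prime_dvd_power by blast
    then obtain l1 where l1: "l = p * l1" by (auto simp: dvd_def)
    have "p * k1^2 = p * (p * l1^2)" using e2 l1 by (simp add: power2_eq_square algebra_simps)
    then have e3: "k1^2 = p * l1^2" using p by (simp add: prime_gt_0_int)
    have p2: "p \<ge> 2" using p prime_ge_2_int by blast
    have "l1 \<noteq> 0" using l0 l1 by simp
    then have "\<bar>l1\<bar> < \<bar>l\<bar>" using l1 p2 by (simp add: abs_mult)
    then have "nat \<bar>l1\<bar> < nat \<bar>l\<bar>" by simp
    from less.hyps[OF this e3] have "l1 = 0" .
    then show False using l0 l1 by simp
  qed
qed

lemma zev_add[simp]: "zev w (zadd a b) = zev w a + zev w b"
  by (cases a; cases b) (simp add: algebra_simps)
lemma zev_sub[simp]: "zev w (zsub a b) = zev w a - zev w b"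
  by (cases a; cases b) (simp add: algebra_simps)
lemma zev_neg[simp]: "zev w (zneg a) = - zev w a"
  by (cases a) (simp add: algebra_simps)
lemma zev_mul:
  assumes "w^2 = of_int m + of_int n * w"
  shows "zev w (zmul m n a b) = zev w a * zev w b"
proof (cases a; cases b)
  fix a1 a2 b1 b2 assume [simp]: "a = (a1,a2)" "b = (b1,b2)"
  have "zev w a * zev w b = a1*b1 + (a1*b2+a2*b1)*w + a2*b2*w^2"
    by (simp add: algebra_simps power2_eq_square)
  also have "\<dots> = zev w (zmul m n a b)" unfolding assms by (simp add: algebra_simps)
  finally show ?thesis by simp
qed

lemma golden_sq: "golden^2 = of_int 1 + of_int 1 * golden"
  by (simp add: golden_def power2_eq_square algebra_simps)
lemma sqrt2_sq: "(sqrt 2)^2 = of_int 2 + of_int 0 * sqrt 2"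
  by simp

lemma zev_inj_sqrt2:
  assumes "zev (sqrt 2) a = zev (sqrt 2) b" shows "a = b"
proof (cases a; cases b)
  fix a1 a2 b1 b2 assume ab: "a = (a1,a2)" "b = (b1,b2)"
  have "real_of_int (a1 - b1) = real_of_int (b2 - a2) * sqrt 2" using assms ab by (simp add: algebra_simps)
  then have "(real_of_int (a1 - b1))^2 = 2 * (real_of_int (b2 - a2))^2" by (simp add: power_mult_distrib)
  then have "(a1 - b1)^2 = 2 * (b2 - a2)^2" by (metis (mono_tags) of_int_eq_iff of_int_mult of_int_numeral of_int_power)
  then have "b2 - a2 = 0" using int_sq_prime[of 2 "a1 - b1" "b2 - a2"] by simp
  then show "a = b" using assms ab by simp
qed

lemma zev_inj_golden:
  assumes "zev golden a = zev golden b" shows "a = b"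
proof (cases a; cases b)
  fix a1 a2 b1 b2 assume ab: "a = (a1,a2)" "b = (b1,b2)"
  have "real_of_int (2*(a1 - b1) + (a2 - b2)) = real_of_int (b2 - a2) * sqrt 5" using assms ab
    by (simp add: golden_def algebra_simps add_divide_distrib diff_divide_distrib)
  then have "(real_of_int (2*(a1 - b1) + (a2 - b2)))^2 = 5 * (real_of_int (b2 - a2))^2" by (simp add: power_mult_distrib)
  then have "(2*(a1 - b1) + (a2 - b2))^2 = 5 * (b2 - a2)^2" by (metis (mono_tags) of_int_eq_iff of_int_mult of_int_numeral of_int_power)
  moreover have "prime (5::int)" by simp
  ultimately have "b2 - a2 = 0" using int_sq_prime[of 5] by blast
  then show "a = b" using assms ab by (simp add: golden_def)
qed

fun mX :: "int \<Rightarrow> int \<Rightarrow> zt \<Rightarrow> zt" where "mX m n (x,y,z) = (x, z, zsub (zmul m n x z) y)"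
fun mY :: "int \<Rightarrow> int \<Rightarrow> zt \<Rightarrow> zt" where "mY m n (x,y,z) = (z, y, zsub (zmul m n y z) x)"
fun mXi :: "int \<Rightarrow> int \<Rightarrow> zt \<Rightarrow> zt" where "mXi m n (x,y,z) = (x, zsub (zmul m n x y) z, y)"
fun mYi :: "int \<Rightarrow> int \<Rightarrow> zt \<Rightarrow> zt" where "mYi m n (x,y,z) = (zsub (zmul m n y x) z, y, x)"

fun inT3 :: "zc list \<Rightarrow> zt \<Rightarrow> bool" where
  "inT3 T (a,b,c) = (a \<in> set T \<and> b \<in> set T \<and> c \<in> set T)"

fun escp :: "int \<Rightarrow> int \<Rightarrow> zc list \<Rightarrow> bool list \<Rightarrow> zt \<Rightarrow> bool" where
  "escp m n T [] t = (\<not> inT3 T t)"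
| "escp m n T (b # bs) t = (\<not> inT3 T t \<or> escp m n T bs (if b then mX m n t else mY m n t))"

fun permc :: "nat \<Rightarrow> zt \<Rightarrow> zt" where
  "permc i (a,b,c) = (if i = 0 then (a,b,c) else if i = 1 then (a,c,b) else if i = 2 then (b,a,c)
     else if i = 3 then (b,c,a) else if i = 4 then (c,a,b) else (c,b,a))"
fun signc :: "nat \<Rightarrow> zt \<Rightarrow> zt" where
  "signc j (a,b,c) = (if j = 0 then (a,b,c) else if j = 1 then (a, zneg b, zneg c)
     else if j = 2 then (zneg a, b, zneg c) else (zneg a, zneg b, c))"
definition mvc :: "int \<Rightarrow> int \<Rightarrow> nat \<Rightarrow> zt \<Rightarrow> zt" where
  "mvc m n k t = (if k = 0 then t else if k = 1 then mX m n t else if k = 2 then mY m n t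
     else if k = 3 then mXi m n t else mYi m n t)"

datatype cert = CPin | CEsc "bool list" | CR nat nat nat nat

fun kapc :: "int \<Rightarrow> int \<Rightarrow> zt \<Rightarrow> zc" where
  "kapc m n (x,y,z) = zsub (zsub (zadd (zadd (zmul m n x x) (zmul m n y y)) (zmul m n z z))
      (zmul m n (zmul m n x y) z)) (2,0)"

fun pinc :: "int \<Rightarrow> int \<Rightarrow> zt \<Rightarrow> bool" where
  "pinc m n (x,y,z) = (kapc m n (x,y,z) = (2,0) \<or> (x = (0,0) \<and> y = (0,0)) \<or> (x = (0,0) \<and> z = (0,0)) \<or> (y = (0,0) \<and> z = (0,0)))"

fun valid :: "int \<Rightarrow> int \<Rightarrow> zc list \<Rightarrow> zt list \<Rightarrow> zt \<Rightarrow> cert \<Rightarrow> bool" where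
  "valid m n T W t CPin = pinc m n t"
| "valid m n T W t (CEsc bs) = escp m n T bs t"
| "valid m n T W t (CR k i j l) = (l < length W \<and> signc j (permc i (mvc m n k t)) = W ! l)"

definition chkT :: "int \<Rightarrow> int \<Rightarrow> zc list \<Rightarrow> zt list \<Rightarrow> cert list list list \<Rightarrow> bool" where
  "chkT m n T W C = list_all2 (\<lambda>a ca. list_all2 (\<lambda>b cb. list_all2 (\<lambda>c cc. valid m n T W (a,b,c) cc) T cb) T ca) T C"

definition TD :: "zc list" where "TD = [(0,0),(1,0),(-1,0),(2,0),(-2,0),(0,1),(0,-1),(-1,1),(1,-1)]"
definition TC :: "zc list" where "TC = [(0,0),(1,0),(-1,0),(2,0),(-2,0),(0,1),(0,-1)]"
(* D targets, in Z[phi]; 2r = phi, 2s = phi - 1 *)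
definition WD :: "zt list" where "WD = [((1,0),(1,0),(1,0)), ((1,-1),(-1,1),(-1,1)), ((1,-1),(1,-1),(1,0)),
   ((0,1),(0,-1),(0,-1)), ((0,1),(1,0),(0,1)), ((1,0),(0,1),(1,0)), ((1,0),(-1,1),(-1,0)), ((1,0),(0,1),(-1,1))]"
definition WC :: "zt list" where "WC = [((0,1),(1,0),(0,1)), ((1,0),(1,0),(1,0))]"

lemma inj_img: "f a \<in> f ` S \<Longrightarrow> (\<And>a b. f a = f b \<Longrightarrow> a = b) \<Longrightarrow> a \<in> S"
  by (metis imageE)

context
  fixes w :: real and m n :: int
  assumes sq: "w^2 = of_int m + of_int n * w"
begin

lemma tev_mX: "tev w (mX m n t) = tauX (tev w t)"
  by (cases t) (simp add: tauX_def zev_mul[OF sq])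
lemma tev_mY: "tev w (mY m n t) = tauY (tev w t)"
  by (cases t) (simp add: tauY_def zev_mul[OF sq])
lemma tev_mXi: "tev w (mXi m n t) = tauX_inv (tev w t)"
  by (cases t) (simp add: tauX_inv_def zev_mul[OF sq])
lemma tev_mYi: "tev w (mYi m n t) = tauY_inv (tev w t)"
  by (cases t) (simp add: tauY_inv_def zev_mul[OF sq])

lemma tev_mvc: "\<exists>\<gamma>\<in>Gamma. tev w (mvc m n k t) = \<gamma> (tev w t)"
proof -
  have g: "id \<in> Gamma" "tauX \<in> Gamma" "tauY \<in> Gamma" "tauX_inv \<in> Gamma" "tauY_inv \<in> Gamma"
    using Gamma.GX[OF Gamma.Gid] Gamma.GY[OF Gamma.Gid] Gamma.GXi[OF Gamma.Gid] Gamma.GYi[OF Gamma.Gid] Gamma.Gid by auto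
  show ?thesis
    using g by (auto simp: mvc_def tev_mX tev_mY tev_mXi tev_mYi) (metis id_apply)
qed

lemma kapc_sound: "zev w (kapc m n (a,b,c)) =
   (zev w a)^2 + (zev w b)^2 + (zev w c)^2 - zev w a * zev w b * zev w c - 2"
  by (simp add: zev_mul[OF sq] power2_eq_square)

lemma escp_sound:
  assumes inj: "\<And>a b. zev w a = zev w b \<Longrightarrow> a = b"
    and clX: "\<And>t. P t \<Longrightarrow> P (tauX t)" and clY: "\<And>t. P t \<Longrightarrow> P (tauY t)"
    and inT: "\<And>x y z. P (x,y,z) \<Longrightarrow> x \<in> zev w ` set T \<and> y \<in> zev w ` set T \<and> z \<in> zev w ` set T"
  shows "escp m n T bs t \<Longrightarrow> \<not> P (tev w t)"
proof (induction bs arbitrary: t)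
  case Nil
  obtain a b c where t: "t = (a,b,c)" by (cases t)
  show ?case
  proof
    assume "P (tev w t)"
    then have "zev w a \<in> zev w ` set T" "zev w b \<in> zev w ` set T" "zev w c \<in> zev w ` set T"
      using inT t by auto
    then have "a \<in> set T" "b \<in> set T" "c \<in> set T" using inj_img[of "zev w", OF _ inj] by blast+
    then show False using Nil t by simp
  qed
next
  case (Cons b bs)
  obtain a1 a2 a3 where t: "t = (a1,a2,a3)" by (cases t)
  show ?case
  proof
    assume P: "P (tev w t)"
    then have "zev w a1 \<in> zev w ` set T" "zev w a2 \<in> zev w ` set T" "zev w a3 \<in> zev w ` set T"
      using inT t by auto
    then have "a1 \<in> set T" "a2 \<in> set T" "a3 \<in> set T" using inj_img[of "zev w", OF _ inj] by blast+
    then have "inT3 T t" using t by simp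
    then have e: "escp m n T bs (if b then mX m n t else mY m n t)" using Cons.prems by simp
    have "P (tev w (if b then mX m n t else mY m n t))"
      using clX[OF P] clY[OF P] by (simp add: tev_mX tev_mY)
    then show False using Cons.IH[OF e] by simp
  qed
qed

end

definition permR :: "nat \<Rightarrow> triple \<Rightarrow> triple" where
  "permR i t = (case t of (a,b,c) \<Rightarrow> (if i = 0 then (a,b,c) else if i = 1 then (a,c,b) else if i = 2 then (b,a,c)
     else if i = 3 then (b,c,a) else if i = 4 then (c,a,b) else (c,b,a)))"
definition sgnR :: "nat \<Rightarrow> real \<times> real \<times> real" where
  "sgnR j = (if j = 0 then (1,1,1) else if j = 1 then (1,-1,-1) else if j = 2 then (-1,1,-1) else (-1,-1,1))"

lemma S_equiv_I:
  assumes "p \<in> {(a,b,c), (a,c,b), (b,a,c), (b,c,a), (c,a,b), (c,b,a)}"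
    and "e \<in> {(1,1,1),(1,-1,-1),(-1,1,-1),(-1,-1,1)}"
    and "u = (fst e * fst p, fst (snd e) * fst (snd p), snd (snd e) * snd (snd p))"
  shows "S_equiv (a,b,c) u"
proof -
  obtain e1 e2 e3 where e: "e = (e1,e2,e3)" by (cases e)
  have E: "e1 \<in> {1,-1} \<and> e2 \<in> {1,-1} \<and> e3 \<in> {1,-1} \<and> e1*e2*e3 = 1" using assms(2) e by auto
  have U: "u = (e1 * fst p, e2 * fst (snd p), e3 * snd (snd p))" using assms(3) e by simp
  show ?thesis unfolding S_equiv_def prod.case
    apply (rule bexI[OF _ assms(1)])
    apply (rule exI[of _ e1], rule exI[of _ e2], rule exI[of _ e3])
    using E U by blast
qed

lemma signc_permc_S: "S_equiv (tev w t) (tev w (signc j (permc i t)))"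
proof -
  obtain a b c where t: "t = (a,b,c)" by (cases t)
  show ?thesis unfolding t tev.simps
  proof (rule S_equiv_I[where p = "permR i (zev w a, zev w b, zev w c)" and e = "sgnR j"])
    show "permR i (zev w a, zev w b, zev w c) \<in> {(zev w a, zev w b, zev w c), (zev w a, zev w c, zev w b),
      (zev w b, zev w a, zev w c), (zev w b, zev w c, zev w a), (zev w c, zev w a, zev w b), (zev w c, zev w b, zev w a)}"
      by (simp add: permR_def)
    show "sgnR j \<in> {(1,1,1),(1,-1,-1),(-1,1,-1),(-1,-1,1)}" by (simp add: sgnR_def)
    show "tev w (signc j (permc i (a, b, c))) = (fst (sgnR j) * fst (permR i (zev w a, zev w b, zev w c)),
      fst (snd (sgnR j)) * fst (snd (permR i (zev w a, zev w b, zev w c))),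
      snd (snd (sgnR j)) * snd (snd (permR i (zev w a, zev w b, zev w c))))"
      by (simp add: permR_def sgnR_def)
  qed
qed

lemma valid_CR_sound:
  assumes sq: "w^2 = of_int m + of_int n * w" and "valid m n T W t (CR k i j l)"
  shows "\<exists>\<gamma>\<in>Gamma. \<exists>u\<in>set W. S_equiv (\<gamma> (tev w t)) (tev w u)"
proof -
  from assms have l: "l < length W" "signc j (permc i (mvc m n k t)) = W ! l" by auto
  obtain \<gamma> where g: "\<gamma> \<in> Gamma" "tev w (mvc m n k t) = \<gamma> (tev w t)" using tev_mvc[OF sq] by blast
  have "S_equiv (\<gamma> (tev w t)) (tev w (W ! l))"
    using signc_permc_S[of w "mvc m n k t" j i] g l by simp
  then show ?thesis using g l by (metis nth_mem)
qed

lemma cadj_mult: "cadj ((A::cmat2) ** B) = cadj B ** cadj A"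
  apply (subst (1 2) mat2_eta[of A], subst (1 2) mat2_eta[of B])
  by (simp add: mat2_mult mat2_cadj mat2_eq_iff algebra_simps)

lemma SU2_mult: "A \<in> SU2 \<Longrightarrow> B \<in> SU2 \<Longrightarrow> A ** B \<in> SU2"
  unfolding SU2_def
  by (simp add: cadj_mult det_mul matrix_mul_assoc) (metis matrix_mul_assoc matrix_mul_rid)

lemma preimage_rot_SU2: "preimage_rot V \<subseteq> SU2"
  unfolding preimage_rot_def by auto

lemma preimage_rot_mult:
  assumes "A \<in> preimage_rot V" "B \<in> preimage_rot V"
  shows "A ** B \<in> preimage_rot V"
proof -
  have "A ** B \<in> SU2" using assms SU2_mult preimage_rot_SU2 by blast
  moreover have "(A ** B) ** emb3 v ** cadj (A ** B) \<in> emb3 ` V" if v: "v \<in> V" for v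
  proof -
    obtain v' where v': "v' \<in> V" "B ** emb3 v ** cadj B = emb3 v'"
      using assms(2) v unfolding preimage_rot_def by blast
    have "(A ** B) ** emb3 v ** cadj (A ** B) = A ** (B ** emb3 v ** cadj B) ** cadj A"
      by (simp add: cadj_mult matrix_mul_assoc)
    also have "\<dots> = A ** emb3 v' ** cadj A" using v' by simp
    finally show ?thesis using assms(1) v' unfolding preimage_rot_def by auto
  qed
  ultimately show ?thesis unfolding preimage_rot_def by blast
qed

lemma trace_AAB: "trace ((A::cmat2) ** (A ** B)) = trace A * trace (A ** B) - det A * trace B"
  apply (subst (1 2 3 4) mat2_eta[of A], subst (1 2 3) mat2_eta[of B])
  by (simp only: mat2_mult mat2_trace mat2_det) (simp add: det_2 algebra_simps)

lemma trace_ABB: "trace (((A::cmat2) ** B) ** B) = trace B * trace (A ** B) - det B * trace A"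
  apply (subst (1 2 3) mat2_eta[of A], subst (1 2 3 4) mat2_eta[of B])
  by (simp only: mat2_mult mat2_trace mat2_det) (simp add: det_2 algebra_simps)

lemma SU2_det: "A \<in> SU2 \<Longrightarrow> det A = 1" by (simp add: SU2_def)

lemma rep_tauX:
  assumes sub: "G \<subseteq> SU2" and cl: "\<And>A B. A \<in> G \<Longrightarrow> B \<in> G \<Longrightarrow> A ** B \<in> G"
    and r: "rep_class_in G t"
  shows "rep_class_in G (tauX t)"
proof -
  obtain x y z where t: "t = (x,y,z)" by (cases t)
  obtain A B where AB: "A \<in> G" "B \<in> G" "trace A = of_real x" "trace B = of_real y" "trace (A ** B) = of_real z"
    using r t unfolding rep_class_in_def by auto
  have "trace (A ** (A ** B)) = of_real (x * z - y)"
    using trace_AAB[of A B] AB SU2_det[of A] sub by auto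
  then show ?thesis unfolding rep_class_in_def t tauX_def using AB cl by auto
qed

lemma rep_tauY:
  assumes sub: "G \<subseteq> SU2" and cl: "\<And>A B. A \<in> G \<Longrightarrow> B \<in> G \<Longrightarrow> A ** B \<in> G"
    and r: "rep_class_in G t"
  shows "rep_class_in G (tauY t)"
proof -
  obtain x y z where t: "t = (x,y,z)" by (cases t)
  obtain A B where AB: "A \<in> G" "B \<in> G" "trace A = of_real x" "trace B = of_real y" "trace (A ** B) = of_real z"
    using r t unfolding rep_class_in_def by auto
  have "trace ((A ** B) ** B) = of_real (y * z - x)"
    using trace_ABB[of A B] AB SU2_det[of B] sub by auto
  then show ?thesis unfolding rep_class_in_def t tauY_def using AB cl by auto
qed

definition Um :: "real \<Rightarrow> cmat2" where "Um t = (cos t) *\<^sub>R mat 1 + (sin t) *\<^sub>R qJ"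
definition Km :: "real \<Rightarrow> cmat2" where "Km t = (cos t) *\<^sub>R qK + (sin t) *\<^sub>R qI"

lemma Um_in: "Um t \<in> Pin2" unfolding Pin2_def Um_def by blast
lemma Km_in: "Km t \<in> Pin2" unfolding Pin2_def Km_def by blast

lemma Um_mat2: "Um t = mat2 (of_real (cos t)) (of_real (sin t)) (- of_real (sin t)) (of_real (cos t))"
  unfolding Um_def mat2_one qJ_def mat2_scaleR mat2_add by (simp add: mat2_eq_iff scaleR_conv_of_real)
lemma Km_mat2: "Km t = mat2 (\<i> * of_real (sin t)) (\<i> * of_real (cos t)) (\<i> * of_real (cos t)) (- \<i> * of_real (sin t))"
  unfolding Km_def qK_def qI_def mat2_scaleR mat2_add by (simp add: mat2_eq_iff scaleR_conv_of_real)

lemma tr_Um: "trace (Um t) = of_real (2 * cos t)"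
  by (simp add: Um_mat2 mat2_trace)
lemma tr_Km: "trace (Km t) = 0"
  by (simp add: Km_mat2 mat2_trace)
lemma tr_UU: "trace (Um a ** Um b) = of_real (2 * cos (a + b))"
  by (simp add: Um_mat2 mat2_mult mat2_trace cos_add complex_eq_iff)
lemma tr_KK: "trace (Km a ** Km b) = of_real (- 2 * cos (a - b))"
  by (simp add: Km_mat2 mat2_mult mat2_trace cos_diff complex_eq_iff)
lemma tr_UK: "trace (Um a ** Km b) = 0"
  by (simp add: Km_mat2 Um_mat2 mat2_mult mat2_trace complex_eq_iff)
lemma tr_KU: "trace (Km a ** Um b) = 0"
  by (simp add: Km_mat2 Um_mat2 mat2_mult mat2_trace complex_eq_iff)

lemma pin2_rep:
  assumes E: "(x, y, z) \<in> Eset"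
    and c: "x^2 + y^2 + z^2 - x*y*z - 2 = 2 \<or> (x = 0 \<and> y = 0) \<or> (x = 0 \<and> z = 0) \<or> (y = 0 \<and> z = 0)"
  shows "rep_class_in Pin2 (x, y, z)"
proof -
  from E have b: "-2 \<le> x" "x \<le> 2" "-2 \<le> y" "y \<le> 2" "-2 \<le> z" "z \<le> 2" by (auto simp: Eset_def)
  have ac: "\<And>u. -2 \<le> u \<Longrightarrow> u \<le> 2 \<Longrightarrow> 2 * cos (arccos (u/2)) = u"
    by (subst cos_arccos) auto
  from c consider "x^2 + y^2 + z^2 - x*y*z - 2 = 2" | "x = 0 \<and> y = 0" | "x = 0 \<and> z = 0" | "y = 0 \<and> z = 0"
    by blast
  then show ?thesis
  proof cases
    case 1
    define a where "a = arccos (x/2)"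
    define b where "b = arccos (y/2)"
    have ca: "cos a = x/2" using ac[OF b(1,2)] a_def by simp
    have cb: "cos b = y/2" using ac[OF b(3,4)] b_def by simp
    have sa: "sin a ^ 2 = 1 - (x/2)^2" by (simp only: sin_squared_eq ca)
    have sb: "sin b ^ 2 = 1 - (y/2)^2" by (simp only: sin_squared_eq cb)
    have "(z - 2 * cos (a + b)) * (z - 2 * cos (a - b))
        = z^2 - 4*z*cos a*cos b + 4*((cos a)^2 * (cos b)^2 - (sin a)^2 * (sin b)^2)"
      unfolding cos_add cos_diff by algebra
    also have "\<dots> = x^2 + y^2 + z^2 - x*y*z - 4" unfolding sa sb ca cb by (simp add: power2_eq_square algebra_simps)
    also have "\<dots> = 0" using 1 by simp
    finally have "z = 2 * cos (a + b) \<or> z = 2 * cos (a + - b)" by auto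
    moreover have "y = 2 * cos b" "y = 2 * cos (-b)" using cb by auto
    ultimately obtain b' where b': "z = 2 * cos (a + b')" "y = 2 * cos b'"
      by blast
    have xa: "x = 2 * cos a" using ca by simp
    show ?thesis unfolding rep_class_in_def
      apply (rule bexI[of _ "Um a"], rule bexI[of _ "Um b'"])
      using Um_in[of a] Um_in[of b'] tr_Um[of a] tr_Um[of b'] tr_UU[of a b'] xa b' by simp_all
  next
    case 2
    define t where "t = arccos (- z/2)"
    have "2 * cos t = - z" using ac[of "-z"] b t_def by simp
    then show ?thesis unfolding rep_class_in_def using 2 Km_in[of 0] Km_in[of t] tr_Km tr_KK[of 0 t]
      by (intro bexI[of _ "Km 0"] bexI[of _ "Km t"]) auto
  next
    case 3
    define t where "t = arccos (y/2)"
    have "2 * cos t = y" using ac[of "y"] b t_def by simp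
    then show ?thesis unfolding rep_class_in_def using 3 Km_in[of 0] Um_in[of t] tr_Km tr_Um[of t] tr_KU[of 0 t]
      by (intro bexI[of _ "Km 0"] bexI[of _ "Um t"]) auto
  next
    case 4
    define t where "t = arccos (x/2)"
    have "2 * cos t = x" using ac[of "x"] b t_def by simp
    then show ?thesis unfolding rep_class_in_def using 4 Km_in[of 0] Um_in[of t] tr_Km tr_Um[of t] tr_UK[of t 0]
      by (intro bexI[of _ "Um t"] bexI[of _ "Km 0"]) auto
  qed
qed

definition certD :: "cert list list list" where "certD =
[[[CPin,CPin,CPin,CPin,CPin,CPin,CPin,CPin,CPin],
  [CPin,(CR 2 0 0 0),(CR 2 0 2 0),(CEsc [False,True]),(CEsc [False,True]),(CR 2 0 0 4),(CR 2 0 2 4),(CR 2 1 3 2),(CR 2 1 0 2)],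
  [CPin,(CR 2 0 1 0),(CR 2 0 3 0),(CEsc [False,True]),(CEsc [False,True]),(CR 2 0 1 4),(CR 2 0 3 4),(CR 2 1 2 2),(CR 2 1 1 2)],
  [CPin,(CEsc [False,False]),(CEsc [False,False]),(CEsc [False]),(CEsc [False]),(CEsc [False]),(CEsc [False]),(CEsc [False]),(CEsc [False])],
  [CPin,(CEsc [False,False]),(CEsc [False,False]),(CEsc [False]),(CEsc [False]),(CEsc [False]),(CEsc [False]),(CEsc [False]),(CEsc [False])],
  [CPin,(CR 2 2 0 4),(CR 2 2 1 4),(CEsc [False]),(CEsc [False]),(CEsc [False]),(CEsc [False]),(CR 2 5 0 7),(CR 2 5 2 7)],
  [CPin,(CR 2 2 2 4),(CR 2 2 3 4),(CEsc [False]),(CEsc [False]),(CEsc [False]),(CEsc [False]),(CR 2 5 3 7),(CR 2 5 1 7)],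
  [CPin,(CR 2 3 3 2),(CR 2 3 2 2),(CEsc [False]),(CEsc [False]),(CR 2 4 0 7),(CR 2 4 3 7),(CEsc [False]),(CEsc [False])],
  [CPin,(CR 2 3 0 2),(CR 2 3 1 2),(CEsc [False]),(CEsc [False]),(CR 2 4 2 7),(CR 2 4 1 7),(CEsc [False]),(CEsc [False])]],
 [[CPin,(CR 1 0 0 0),(CR 1 0 1 0),(CEsc [True,False]),(CEsc [True,False]),(CR 1 2 0 4),(CR 1 2 2 4),(CR 1 3 3 2),(CR 1 3 0 2)],
  [(CR 3 0 0 0),(CR 0 0 0 0),CPin,CPin,(CEsc [True]),(CR 0 1 0 5),(CEsc [True]),(CEsc [True]),(CR 0 1 1 6)],
  [(CR 3 0 1 0),CPin,(CR 0 0 1 0),(CEsc [True]),CPin,(CEsc [True]),(CR 0 1 1 5),(CR 0 1 0 6),(CEsc [True])],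
  [(CEsc [True,True,False]),CPin,(CEsc [True]),(CEsc [False]),(CEsc [True]),(CEsc [True]),(CEsc [True]),(CEsc [True]),(CEsc [True])],
  [(CEsc [True,True,False]),(CEsc [True]),CPin,(CEsc [True]),(CEsc [False]),(CEsc [True]),(CEsc [True]),(CEsc [True]),(CEsc [True])],
  [(CR 3 2 0 4),(CR 0 0 0 5),(CEsc [True]),(CEsc [True]),(CEsc [True]),(CR 0 2 0 4),(CEsc [True]),(CR 0 0 0 7),(CEsc [True])],
  [(CR 3 2 2 4),(CEsc [True]),(CR 0 0 1 5),(CEsc [True]),(CEsc [True]),(CEsc [True]),(CR 0 2 2 4),(CEsc [True]),(CR 0 0 1 7)],
  [(CR 3 3 3 2),(CEsc [True]),(CR 0 0 0 6),(CEsc [True]),(CEsc [True]),(CR 0 1 0 7),(CEsc [True]),(CR 0 3 3 2),(CEsc [True])],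
  [(CR 3 3 0 2),(CR 0 0 1 6),(CEsc [True]),(CEsc [True]),(CEsc [True]),(CEsc [True]),(CR 0 1 1 7),(CEsc [True]),(CR 0 3 0 2)]],
 [[CPin,(CR 1 0 2 0),(CR 1 0 3 0),(CEsc [True,False]),(CEsc [True,False]),(CR 1 2 1 4),(CR 1 2 3 4),(CR 1 3 2 2),(CR 1 3 1 2)],
  [(CR 3 0 3 0),CPin,(CR 0 0 2 0),(CEsc [True]),CPin,(CEsc [True]),(CR 0 1 3 5),(CR 0 1 2 6),(CEsc [True])],
  [(CR 3 0 2 0),(CR 0 0 3 0),CPin,CPin,(CEsc [True]),(CR 0 1 2 5),(CEsc [True]),(CEsc [True]),(CR 0 1 3 6)],
  [(CEsc [True,True,False]),(CEsc [True]),CPin,(CEsc [True]),(CEsc [False]),(CEsc [True]),(CEsc [True]),(CEsc [True]),(CEsc [True])],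
  [(CEsc [True,True,False]),CPin,(CEsc [True]),(CEsc [False]),(CEsc [True]),(CEsc [True]),(CEsc [True]),(CEsc [True]),(CEsc [True])],
  [(CR 3 2 3 4),(CEsc [True]),(CR 0 0 2 5),(CEsc [True]),(CEsc [True]),(CEsc [True]),(CR 0 2 1 4),(CEsc [True]),(CR 0 0 2 7)],
  [(CR 3 2 1 4),(CR 0 0 3 5),(CEsc [True]),(CEsc [True]),(CEsc [True]),(CR 0 2 3 4),(CEsc [True]),(CR 0 0 3 7),(CEsc [True])],
  [(CR 3 3 1 2),(CR 0 0 2 6),(CEsc [True]),(CEsc [True]),(CEsc [True]),(CEsc [True]),(CR 0 1 3 7),(CEsc [True]),(CR 0 3 2 2)],
  [(CR 3 3 2 2),(CEsc [True]),(CR 0 0 3 6),(CEsc [True]),(CEsc [True]),(CR 0 1 2 7),(CEsc [True]),(CR 0 3 1 2),(CEsc [True])]],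
 [[CPin,(CEsc [True,True]),(CEsc [True,True]),(CEsc [True]),(CEsc [True]),(CEsc [True]),(CEsc [True]),(CEsc [True]),(CEsc [True])],
  [(CEsc [True,True,True]),CPin,(CEsc [True]),(CEsc [True]),(CEsc [True]),(CEsc [True]),(CEsc [True]),(CEsc [True]),(CEsc [True])],
  [(CEsc [True,True,True]),(CEsc [True]),CPin,(CEsc [True]),(CEsc [True]),(CEsc [True]),(CEsc [True]),(CEsc [True]),(CEsc [True])],
  [(CEsc [True,True]),(CEsc [True,True,True,True]),(CEsc [True]),CPin,(CEsc [True]),(CEsc [True]),(CEsc [True]),(CEsc [True]),(CEsc [True])],
  [(CEsc [True,True]),(CEsc [True]),(CEsc [True,True,True,True]),(CEsc [True]),CPin,(CEsc [True]),(CEsc [True]),(CEsc [True]),(CEsc [True])],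
  [(CEsc [True,True]),(CEsc [True]),(CEsc [True]),(CEsc [True]),(CEsc [True]),CPin,(CEsc [True]),(CEsc [True]),(CEsc [True])],
  [(CEsc [True,True]),(CEsc [True]),(CEsc [True]),(CEsc [True]),(CEsc [True]),(CEsc [True]),CPin,(CEsc [True]),(CEsc [True])],
  [(CEsc [True,True]),(CEsc [True]),(CEsc [True]),(CEsc [True]),(CEsc [True]),(CEsc [True]),(CEsc [True]),CPin,(CEsc [True])],
  [(CEsc [True,True]),(CEsc [True]),(CEsc [True]),(CEsc [True]),(CEsc [True]),(CEsc [True]),(CEsc [True]),(CEsc [True]),CPin]],
 [[CPin,(CEsc [True,True]),(CEsc [True,True]),(CEsc [True]),(CEsc [True]),(CEsc [True]),(CEsc [True]),(CEsc [True]),(CEsc [True])],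
  [(CEsc [True,True,True]),(CEsc [True]),CPin,(CEsc [True]),(CEsc [True]),(CEsc [True]),(CEsc [True]),(CEsc [True]),(CEsc [True])],
  [(CEsc [True,True,True]),CPin,(CEsc [True]),(CEsc [True]),(CEsc [True]),(CEsc [True]),(CEsc [True]),(CEsc [True]),(CEsc [True])],
  [(CEsc [True,True]),(CEsc [True]),(CEsc [True,True,True,True]),(CEsc [True]),CPin,(CEsc [True]),(CEsc [True]),(CEsc [True]),(CEsc [True])],
  [(CEsc [True,True]),(CEsc [True,True,True,True]),(CEsc [True]),CPin,(CEsc [True]),(CEsc [True]),(CEsc [True]),(CEsc [True]),(CEsc [True])],
  [(CEsc [True,True]),(CEsc [True]),(CEsc [True]),(CEsc [True]),(CEsc [True]),(CEsc [True]),CPin,(CEsc [True]),(CEsc [True])],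
  [(CEsc [True,True]),(CEsc [True]),(CEsc [True]),(CEsc [True]),(CEsc [True]),CPin,(CEsc [True]),(CEsc [True]),(CEsc [True])],
  [(CEsc [True,True]),(CEsc [True]),(CEsc [True]),(CEsc [True]),(CEsc [True]),(CEsc [True]),(CEsc [True]),(CEsc [True]),CPin],
  [(CEsc [True,True]),(CEsc [True]),(CEsc [True]),(CEsc [True]),(CEsc [True]),(CEsc [True]),(CEsc [True]),CPin,(CEsc [True])]],
 [[CPin,(CR 1 0 0 4),(CR 1 0 1 4),(CEsc [True]),(CEsc [True]),(CEsc [True]),(CEsc [True]),(CR 1 4 0 7),(CR 1 4 2 7)],
  [(CR 3 1 0 4),(CR 0 2 0 5),(CEsc [True]),(CEsc [True]),(CEsc [True]),(CR 0 0 0 4),(CEsc [True]),(CR 0 2 0 7),(CEsc [False])],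
  [(CR 3 1 1 4),(CEsc [True]),(CR 0 2 2 5),(CEsc [True]),(CEsc [True]),(CEsc [True]),(CR 0 0 1 4),(CEsc [False]),(CR 0 2 2 7)],
  [(CEsc [True,True]),(CEsc [True]),(CEsc [True]),(CEsc [True]),(CEsc [True]),CPin,(CEsc [True]),(CEsc [False]),(CEsc [True])],
  [(CEsc [True,True]),(CEsc [True]),(CEsc [True]),(CEsc [True]),(CEsc [True]),(CEsc [True]),CPin,(CEsc [True]),(CEsc [False])],
  [(CEsc [True,True]),(CR 0 1 0 4),(CEsc [True]),CPin,(CEsc [True]),(CR 0 0 1 3),(CEsc [True]),CPin,(CEsc [True])],
  [(CEsc [True,True]),(CEsc [True]),(CR 0 1 1 4),(CEsc [True]),CPin,(CEsc [True]),(CR 0 0 0 3),(CEsc [True]),CPin],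
  [(CR 3 2 0 7),(CR 0 4 0 7),(CEsc [True]),(CEsc [True]),(CEsc [True]),CPin,(CEsc [True]),(CEsc [True]),CPin],
  [(CR 3 2 2 7),(CEsc [True]),(CR 0 4 2 7),(CEsc [True]),(CEsc [True]),(CEsc [True]),CPin,CPin,(CEsc [True])]],
 [[CPin,(CR 1 0 2 4),(CR 1 0 3 4),(CEsc [True]),(CEsc [True]),(CEsc [True]),(CEsc [True]),(CR 1 4 3 7),(CR 1 4 1 7)],
  [(CR 3 1 2 4),(CEsc [True]),(CR 0 2 1 5),(CEsc [True]),(CEsc [True]),(CEsc [True]),(CR 0 0 2 4),(CEsc [False]),(CR 0 2 1 7)],
  [(CR 3 1 3 4),(CR 0 2 3 5),(CEsc [True]),(CEsc [True]),(CEsc [True]),(CR 0 0 3 4),(CEsc [True]),(CR 0 2 3 7),(CEsc [False])],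
  [(CEsc [True,True]),(CEsc [True]),(CEsc [True]),(CEsc [True]),(CEsc [True]),(CEsc [True]),CPin,(CEsc [True]),(CEsc [False])],
  [(CEsc [True,True]),(CEsc [True]),(CEsc [True]),(CEsc [True]),(CEsc [True]),CPin,(CEsc [True]),(CEsc [False]),(CEsc [True])],
  [(CEsc [True,True]),(CEsc [True]),(CR 0 1 3 4),(CEsc [True]),CPin,(CEsc [True]),(CR 0 0 3 3),(CEsc [True]),CPin],
  [(CEsc [True,True]),(CR 0 1 2 4),(CEsc [True]),CPin,(CEsc [True]),(CR 0 0 2 3),(CEsc [True]),CPin,(CEsc [True])],
  [(CR 3 2 3 7),(CEsc [True]),(CR 0 4 3 7),(CEsc [True]),(CEsc [True]),(CEsc [True]),CPin,CPin,(CEsc [True])],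
  [(CR 3 2 1 7),(CR 0 4 1 7),(CEsc [True]),(CEsc [True]),(CEsc [True]),CPin,(CEsc [True]),(CEsc [True]),CPin]],
 [[CPin,(CR 1 1 3 2),(CR 1 1 2 2),(CEsc [True]),(CEsc [True]),(CR 1 5 0 7),(CR 1 5 3 7),(CEsc [True]),(CEsc [True])],
  [(CR 3 0 3 2),(CEsc [True]),(CR 0 2 0 6),(CEsc [True]),(CEsc [True]),(CR 0 3 0 7),(CEsc [False]),(CR 0 1 3 2),(CEsc [True])],
  [(CR 3 0 2 2),(CR 0 2 2 6),(CEsc [True]),(CEsc [True]),(CEsc [True]),(CEsc [False]),(CR 0 3 3 7),(CEsc [True]),(CR 0 1 2 2)],
  [(CEsc [True,True]),(CEsc [True]),(CEsc [True]),(CEsc [True]),(CEsc [True]),(CEsc [False]),(CEsc [True]),CPin,(CEsc [True])],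
  [(CEsc [True,True]),(CEsc [True]),(CEsc [True]),(CEsc [True]),(CEsc [True]),(CEsc [True]),(CEsc [False]),(CEsc [True]),CPin],
  [(CR 3 3 0 7),(CR 0 5 0 7),(CEsc [True]),(CEsc [True]),(CEsc [True]),CPin,(CEsc [True]),(CEsc [True]),CPin],
  [(CR 3 3 3 7),(CEsc [True]),(CR 0 5 3 7),(CEsc [True]),(CEsc [True]),(CEsc [True]),CPin,CPin,(CEsc [True])],
  [(CEsc [True,True]),(CR 0 0 3 2),(CEsc [True]),CPin,(CEsc [True]),(CEsc [True]),CPin,(CEsc [True]),(CR 0 0 2 1)],
  [(CEsc [True,True]),(CEsc [True]),(CR 0 0 2 2),(CEsc [True]),CPin,CPin,(CEsc [True]),(CR 0 0 3 1),(CEsc [True])]],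
 [[CPin,(CR 1 1 0 2),(CR 1 1 1 2),(CEsc [True]),(CEsc [True]),(CR 1 5 2 7),(CR 1 5 1 7),(CEsc [True]),(CEsc [True])],
  [(CR 3 0 0 2),(CR 0 2 1 6),(CEsc [True]),(CEsc [True]),(CEsc [True]),(CEsc [False]),(CR 0 3 1 7),(CEsc [True]),(CR 0 1 0 2)],
  [(CR 3 0 1 2),(CEsc [True]),(CR 0 2 3 6),(CEsc [True]),(CEsc [True]),(CR 0 3 2 7),(CEsc [False]),(CR 0 1 1 2),(CEsc [True])],
  [(CEsc [True,True]),(CEsc [True]),(CEsc [True]),(CEsc [True]),(CEsc [True]),(CEsc [True]),(CEsc [False]),(CEsc [True]),CPin],
  [(CEsc [True,True]),(CEsc [True]),(CEsc [True]),(CEsc [True]),(CEsc [True]),(CEsc [False]),(CEsc [True]),CPin,(CEsc [True])],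
  [(CR 3 3 2 7),(CEsc [True]),(CR 0 5 2 7),(CEsc [True]),(CEsc [True]),(CEsc [True]),CPin,CPin,(CEsc [True])],
  [(CR 3 3 1 7),(CR 0 5 1 7),(CEsc [True]),(CEsc [True]),(CEsc [True]),CPin,(CEsc [True]),(CEsc [True]),CPin],
  [(CEsc [True,True]),(CEsc [True]),(CR 0 0 1 2),(CEsc [True]),CPin,CPin,(CEsc [True]),(CR 0 0 0 1),(CEsc [True])],
  [(CEsc [True,True]),(CR 0 0 0 2),(CEsc [True]),CPin,(CEsc [True]),(CEsc [True]),CPin,(CEsc [True]),(CR 0 0 1 1)]]]"

definition certC :: "cert list list list" where "certC =
[[[CPin,CPin,CPin,CPin,CPin,CPin,CPin],
  [CPin,(CR 2 0 0 1),(CR 2 0 2 1),(CEsc [False,True]),(CEsc [False,True]),(CR 2 0 0 0),(CR 2 0 2 0)],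
  [CPin,(CR 2 0 1 1),(CR 2 0 3 1),(CEsc [False,True]),(CEsc [False,True]),(CR 2 0 1 0),(CR 2 0 3 0)],
  [CPin,(CEsc [False,False]),(CEsc [False,False]),(CEsc [False]),(CEsc [False]),(CEsc [False]),(CEsc [False])],
  [CPin,(CEsc [False,False]),(CEsc [False,False]),(CEsc [False]),(CEsc [False]),(CEsc [False]),(CEsc [False])],
  [CPin,(CR 2 2 0 0),(CR 2 2 1 0),(CEsc [False]),(CEsc [False]),CPin,CPin],
  [CPin,(CR 2 2 2 0),(CR 2 2 3 0),(CEsc [False]),(CEsc [False]),CPin,CPin]],
 [[CPin,(CR 1 0 0 1),(CR 1 0 1 1),(CEsc [True,False]),(CEsc [True,False]),(CR 1 2 0 0),(CR 1 2 2 0)],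
  [(CR 3 0 0 1),(CR 0 0 0 1),CPin,CPin,(CEsc [True]),(CEsc [True]),(CEsc [True])],
  [(CR 3 0 1 1),CPin,(CR 0 0 1 1),(CEsc [True]),CPin,(CEsc [True]),(CEsc [True])],
  [(CEsc [True,True,False]),CPin,(CEsc [True]),(CEsc [False]),(CEsc [True]),(CEsc [True]),(CEsc [True])],
  [(CEsc [True,True,False]),(CEsc [True]),CPin,(CEsc [True]),(CEsc [False]),(CEsc [True]),(CEsc [True])],
  [(CR 3 2 0 0),(CEsc [True]),(CEsc [True]),(CEsc [True]),(CEsc [True]),(CR 0 2 0 0),(CEsc [True])],
  [(CR 3 2 2 0),(CEsc [True]),(CEsc [True]),(CEsc [True]),(CEsc [True]),(CEsc [True]),(CR 0 2 2 0)]],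
 [[CPin,(CR 1 0 2 1),(CR 1 0 3 1),(CEsc [True,False]),(CEsc [True,False]),(CR 1 2 1 0),(CR 1 2 3 0)],
  [(CR 3 0 3 1),CPin,(CR 0 0 2 1),(CEsc [True]),CPin,(CEsc [True]),(CEsc [True])],
  [(CR 3 0 2 1),(CR 0 0 3 1),CPin,CPin,(CEsc [True]),(CEsc [True]),(CEsc [True])],
  [(CEsc [True,True,False]),(CEsc [True]),CPin,(CEsc [True]),(CEsc [False]),(CEsc [True]),(CEsc [True])],
  [(CEsc [True,True,False]),CPin,(CEsc [True]),(CEsc [False]),(CEsc [True]),(CEsc [True]),(CEsc [True])],
  [(CR 3 2 3 0),(CEsc [True]),(CEsc [True]),(CEsc [True]),(CEsc [True]),(CEsc [True]),(CR 0 2 1 0)],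
  [(CR 3 2 1 0),(CEsc [True]),(CEsc [True]),(CEsc [True]),(CEsc [True]),(CR 0 2 3 0),(CEsc [True])]],
 [[CPin,(CEsc [True,True]),(CEsc [True,True]),(CEsc [True]),(CEsc [True]),(CEsc [True]),(CEsc [True])],
  [(CEsc [True,True,True]),CPin,(CEsc [True]),(CEsc [True]),(CEsc [True]),(CEsc [True]),(CEsc [True])],
  [(CEsc [True,True,True]),(CEsc [True]),CPin,(CEsc [True]),(CEsc [True]),(CEsc [True]),(CEsc [True])],
  [(CEsc [True,True]),(CEsc [True,True,True,True]),(CEsc [True]),CPin,(CEsc [True]),(CEsc [True]),(CEsc [True])],
  [(CEsc [True,True]),(CEsc [True]),(CEsc [True,True,True,True]),(CEsc [True]),CPin,(CEsc [True]),(CEsc [True])],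
  [(CEsc [True,True]),(CEsc [True]),(CEsc [True]),(CEsc [True]),(CEsc [True]),CPin,(CEsc [True])],
  [(CEsc [True,True]),(CEsc [True]),(CEsc [True]),(CEsc [True]),(CEsc [True]),(CEsc [True]),CPin]],
 [[CPin,(CEsc [True,True]),(CEsc [True,True]),(CEsc [True]),(CEsc [True]),(CEsc [True]),(CEsc [True])],
  [(CEsc [True,True,True]),(CEsc [True]),CPin,(CEsc [True]),(CEsc [True]),(CEsc [True]),(CEsc [True])],
  [(CEsc [True,True,True]),CPin,(CEsc [True]),(CEsc [True]),(CEsc [True]),(CEsc [True]),(CEsc [True])],
  [(CEsc [True,True]),(CEsc [True]),(CEsc [True,True,True,True]),(CEsc [True]),CPin,(CEsc [True]),(CEsc [True])],
  [(CEsc [True,True]),(CEsc [True,True,True,True]),(CEsc [True]),CPin,(CEsc [True]),(CEsc [True]),(CEsc [True])],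
  [(CEsc [True,True]),(CEsc [True]),(CEsc [True]),(CEsc [True]),(CEsc [True]),(CEsc [True]),CPin],
  [(CEsc [True,True]),(CEsc [True]),(CEsc [True]),(CEsc [True]),(CEsc [True]),CPin,(CEsc [True])]],
 [[CPin,(CR 1 0 0 0),(CR 1 0 1 0),(CEsc [True]),(CEsc [True]),CPin,CPin],
  [(CR 3 1 0 0),(CEsc [True]),(CEsc [True]),(CEsc [True]),(CEsc [True]),(CR 0 0 0 0),(CEsc [True])],
  [(CR 3 1 1 0),(CEsc [True]),(CEsc [True]),(CEsc [True]),(CEsc [True]),(CEsc [True]),(CR 0 0 1 0)],
  [(CEsc [True,True]),(CEsc [True]),(CEsc [True]),(CEsc [True]),(CEsc [True]),CPin,(CEsc [True])],
  [(CEsc [True,True]),(CEsc [True]),(CEsc [True]),(CEsc [True]),(CEsc [True]),(CEsc [True]),CPin],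
  [CPin,(CR 0 1 0 0),(CEsc [True]),CPin,(CEsc [True]),(CEsc [True]),(CEsc [True])],
  [CPin,(CEsc [True]),(CR 0 1 1 0),(CEsc [True]),CPin,(CEsc [True]),(CEsc [True])]],
 [[CPin,(CR 1 0 2 0),(CR 1 0 3 0),(CEsc [True]),(CEsc [True]),CPin,CPin],
  [(CR 3 1 2 0),(CEsc [True]),(CEsc [True]),(CEsc [True]),(CEsc [True]),(CEsc [True]),(CR 0 0 2 0)],
  [(CR 3 1 3 0),(CEsc [True]),(CEsc [True]),(CEsc [True]),(CEsc [True]),(CR 0 0 3 0),(CEsc [True])],
  [(CEsc [True,True]),(CEsc [True]),(CEsc [True]),(CEsc [True]),(CEsc [True]),(CEsc [True]),CPin],
  [(CEsc [True,True]),(CEsc [True]),(CEsc [True]),(CEsc [True]),(CEsc [True]),CPin,(CEsc [True])],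
  [CPin,(CEsc [True]),(CR 0 1 3 0),(CEsc [True]),CPin,(CEsc [True]),(CEsc [True])],
  [CPin,(CR 0 1 2 0),(CEsc [True]),CPin,(CEsc [True]),(CEsc [True]),(CEsc [True])]]]"

lemma chkV_dod: "chkV Vdod True [(6,0),(0,2),(2,-2),(0,0),(-2,0)]"
  by code_simp
lemma chkV_cube: "chkV Vcube False [(6,0),(2,0),(0,0),(-2,0)]"
  by code_simp
lemma chkT_D: "chkT 1 1 TD WD certD"
  by code_simp
lemma chkT_C: "chkT 2 0 TC WC certC"
  by code_simp

fun dot3 :: "triple \<Rightarrow> triple \<Rightarrow> real" where
  "dot3 (x1,x2,x3) (y1,y2,y3) = x1*y1 + x2*y2 + x3*y3"
fun cross3 :: "triple \<Rightarrow> triple \<Rightarrow> triple" where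
  "cross3 (x1,x2,x3) (y1,y2,y3) = (x2*y3 - x3*y2, x3*y1 - x1*y3, x1*y2 - x2*y1)"
fun tadd3 :: "triple \<Rightarrow> triple \<Rightarrow> triple" where
  "tadd3 (x1,x2,x3) (y1,y2,y3) = (x1+y1, x2+y2, x3+y3)"
fun tsc3 :: "real \<Rightarrow> triple \<Rightarrow> triple" where
  "tsc3 r (x1,x2,x3) = (r*x1, r*x2, r*x3)"

lemma zev_golden_mul: "zev golden (zmul 1 1 a b) = zev golden a * zev golden b"
  using zev_mul[OF golden_sq] by simp

lemma zt3: obtains x1 x2 x3 :: zc where "c = (x1, x2, x3)"
  by (metis prod.exhaust)

lemma dotc_sound: "zev golden (dotc c1 c2) = dot3 (tev golden c1) (tev golden c2)"
  by (rule zt3[of c1], rule zt3[of c2]) (simp only: dotc.simps tev.simps dot3.simps zev_add zev_golden_mul)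
lemma detc_sound: "zev golden (detc c1 c2 c3) = dot3 (tev golden c1) (cross3 (tev golden c2) (tev golden c3))"
  by (rule zt3[of c1], rule zt3[of c2], rule zt3[of c3])
    (simp only: detc_def crossc.simps dotc.simps tev.simps dot3.simps cross3.simps zev_add zev_sub zev_golden_mul)
lemma trc_sound: "zev golden (trc c1 c2 c3) = fst (tadd3 (tev golden c1) (tev golden c2))
   + fst (snd (tadd3 (tev golden c1) (tev golden c3))) - snd (snd (tadd3 (tev golden c2) (tev golden c3)))"
  by (rule zt3[of c1], rule zt3[of c2], rule zt3[of c3])
    (simp only: trc_def tadd.simps fst3.simps snd3.simps thd3.simps tev.simps tadd3.simps zev_add zev_sub fst_conv snd_conv)
lemma v4c_sound: "tev golden (v4c c1 c2 c3) = tadd3 (tsc3 golden (tadd3 (tev golden c1) (tev golden c2)))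
   (tsc3 (-(golden - 1)) (tadd3 (tev golden c2) (tev golden c3)))"
  by (rule zt3[of c1], rule zt3[of c2], rule zt3[of c3])
    (simp add: v4c_def zev_golden_mul del: zev.simps, simp add: algebra_simps)
lemma tscal2_sound: "tev golden (tscal (2,0) c) = tsc3 2 (tev golden c)"
  by (rule zt3[of c]) (simp add: zev_golden_mul del: zev.simps, simp)

lemma tev_inj_golden: "tev golden c = tev golden c' \<Longrightarrow> c = c'"
  by (rule zt3[of c], rule zt3[of c']) (auto dest: zev_inj_golden simp del: zev.simps)

lemma Rm_dot: "dot3 (Rm a b c d (x1,x2,x3)) (Rm a b c d (y1,y2,y3)) = (a^2+b^2+c^2+d^2)^2 * dot3 (x1,x2,x3) (y1,y2,y3)"
  unfolding Rm_def by simp algebra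

lemma golden_inv: "1 / golden = golden - 1"
proof -
  have "golden * (golden - 1) = 1" using golden_sq by (simp add: power2_eq_square algebra_simps)
  moreover have "golden \<noteq> 0" by (simp add: golden_def) (smt (verit) real_sqrt_ge_zero)
  ultimately show ?thesis by (simp add: field_simps)
qed

lemma zev_codes: "zev golden (-1,1) = 1/golden" "zev golden (1,-1) = -1/golden" "zev golden (0,1) = golden"
  "zev golden (0,-1) = -golden" "zev golden (1,0) = 1" "zev golden (-1,0) = -1" "zev golden (0,0) = 0"
  by (simp_all add: golden_inv)

lemma memC: "ca \<in> {(1,0),(-1,0)} \<Longrightarrow> cb \<in> {(1,0),(-1,0)} \<Longrightarrow> cc \<in> {(1,0),(-1,0)} \<Longrightarrow> (ca,cb,cc) \<in> set Vcube"
  unfolding Vcube_def by auto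
lemma memP1: "cb \<in> {(-1,1),(1,-1)} \<Longrightarrow> cc \<in> {(0,1),(0,-1)} \<Longrightarrow> ((0,0),cb,cc) \<in> set Vdod"
  unfolding Vdod_def by auto
lemma memP2: "ca \<in> {(-1,1),(1,-1)} \<Longrightarrow> cb \<in> {(0,1),(0,-1)} \<Longrightarrow> (ca,cb,(0,0)) \<in> set Vdod"
  unfolding Vdod_def by auto
lemma memP3: "ca \<in> {(0,1),(0,-1)} \<Longrightarrow> cc \<in> {(-1,1),(1,-1)} \<Longrightarrow> (ca,(0,0),cc) \<in> set Vdod"
  unfolding Vdod_def by auto
lemma VcVd: "set Vcube \<subseteq> set Vdod" unfolding Vdod_def by auto

lemma vert_codes_dod: "v \<in> dodecahedron_vertices \<Longrightarrow> \<exists>c\<in>set Vdod. v = tev golden c"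
proof -
  have k1: "\<And>b. b \<in> {1/golden, -1/golden} \<Longrightarrow> \<exists>cb\<in>{(-1,1),(1,-1)}. b = zev golden cb"
    using zev_codes by auto
  have k2: "\<And>b. b \<in> {golden, -golden} \<Longrightarrow> \<exists>cb\<in>{(0,1),(0,-1)}. b = zev golden cb"
    using zev_codes by auto
  have k3: "\<And>b. b \<in> {1, -1} \<Longrightarrow> \<exists>cb\<in>{(1,0),(-1,0)}. b = zev golden cb"
    using zev_codes by auto
  have z: "0 = zev golden (0,0)" by simp
  assume "v \<in> dodecahedron_vertices"
  then consider (C) a b c where "v = (a,b,c)" "a \<in> {1,-1}" "b \<in> {1,-1}" "c \<in> {1,-1}"
    | (P1) b c where "v = (0,b,c)" "b \<in> {1/golden, -1/golden}" "c \<in> {golden, -golden}"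
    | (P2) a b where "v = (a,b,0)" "a \<in> {1/golden, -1/golden}" "b \<in> {golden, -golden}"
    | (P3) a c where "v = (a,0,c)" "a \<in> {golden, -golden}" "c \<in> {1/golden, -1/golden}"
    unfolding dodecahedron_vertices_def cube_vertices_def by blast
  then show ?thesis
  proof cases
    case C
    then obtain ca cb cc where "ca \<in> {(1,0),(-1,0)}" "cb \<in> {(1,0),(-1,0)}" "cc \<in> {(1,0),(-1,0)}"
      "a = zev golden ca" "b = zev golden cb" "c = zev golden cc" using k3 by meson
    then show ?thesis using C memC VcVd by (intro bexI[of _ "(ca,cb,cc)"]) auto
  next
    case P1
    then obtain cb cc where "cb \<in> {(-1,1),(1,-1)}" "cc \<in> {(0,1),(0,-1)}"
      "b = zev golden cb" "c = zev golden cc" using k1 k2 by meson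
    then show ?thesis using P1 memP1 zev_codes(7) by (intro bexI[of _ "((0,0),cb,cc)"]) auto
  next
    case P2
    then obtain ca cb where "ca \<in> {(-1,1),(1,-1)}" "cb \<in> {(0,1),(0,-1)}"
      "a = zev golden ca" "b = zev golden cb" using k1 k2 by meson
    then show ?thesis using P2 memP2 zev_codes(7) by (intro bexI[of _ "(ca,cb,(0,0))"]) auto
  next
    case P3
    then obtain ca cc where "ca \<in> {(0,1),(0,-1)}" "cc \<in> {(-1,1),(1,-1)}"
      "a = zev golden ca" "c = zev golden cc" using k1 k2 by meson
    then show ?thesis using P3 memP3 zev_codes(7) by (intro bexI[of _ "(ca,(0,0),cc)"]) auto
  qed
qed

lemma vert_codes_cube: "v \<in> cube_vertices \<Longrightarrow> \<exists>c\<in>set Vcube. v = tev golden c"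
proof -
  have k3: "\<And>b. b \<in> {1, -1} \<Longrightarrow> \<exists>cb\<in>{(1,0),(-1,0)}. b = zev golden cb"
    using zev_codes by auto
  assume "v \<in> cube_vertices"
  then obtain a b c where C: "v = (a,b,c)" "a \<in> {1,-1}" "b \<in> {1,-1}" "c \<in> {1,-1}"
    unfolding cube_vertices_def by blast
  then obtain ca cb cc where "ca \<in> {(1,0),(-1,0)}" "cb \<in> {(1,0),(-1,0)}" "cc \<in> {(1,0),(-1,0)}"
      "a = zev golden ca" "b = zev golden cb" "c = zev golden cc" using k3 by meson
  then show ?thesis using C memC by (intro bexI[of _ "(ca,cb,cc)"]) auto
qed

lemma cube_sub_dod: "cube_vertices \<subseteq> dodecahedron_vertices"
  unfolding dodecahedron_vertices_def by auto

lemma v123: "(1,1,1) \<in> cube_vertices" "(1,-1,-1) \<in> cube_vertices" "(-1,1,-1) \<in> cube_vertices"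
  unfolding cube_vertices_def by auto

lemma v4: "(golden, 0, golden - 1) \<in> dodecahedron_vertices"
  unfolding dodecahedron_vertices_def golden_inv[symmetric] by auto

lemma Rm_det: "dot3 (Rm a b c d (1,1,1)) (cross3 (Rm a b c d (1,-1,-1)) (Rm a b c d (-1,1,-1))) = 4 * (a^2+b^2+c^2+d^2)^3"
  unfolding Rm_def by simp algebra

lemma Rm_v4: "tadd3 (tsc3 g (tadd3 (Rm a b c d (1,1,1)) (Rm a b c d (1,-1,-1))))
   (tsc3 (-(g - 1)) (tadd3 (Rm a b c d (1,-1,-1)) (Rm a b c d (-1,1,-1)))) = tsc3 2 (Rm a b c d (g, 0, g - 1))"
  unfolding Rm_def by simp algebra

lemma Rm_tr: "fst (tadd3 (Rm a b c d (1,1,1)) (Rm a b c d (1,-1,-1)))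
   + fst (snd (tadd3 (Rm a b c d (1,1,1)) (Rm a b c d (-1,1,-1)))) - snd (snd (tadd3 (Rm a b c d (1,-1,-1)) (Rm a b c d (-1,1,-1))))
   = 2 * (3*a^2 - b^2 - c^2 - d^2)"
  unfolding Rm_def by simp algebra

lemma rot_core:
  assumes N: "a^2 + b^2 + c^2 + d^2 = 1"
    and RV: "\<And>v. v \<in> V \<Longrightarrow> Rm a b c d v \<in> V"
    and VL: "\<And>v. v \<in> V \<Longrightarrow> \<exists>c\<in>set VL. v = tev golden c"
    and v1: "(1,1,1) \<in> V" and v2: "(1,-1,-1) \<in> V" and v3: "(-1,1,-1) \<in> V"
    and v4: "ex \<Longrightarrow> (golden, 0, golden - 1) \<in> V"
    and chk: "chkV VL ex TR"
  shows "8 * a^2 - 2 \<in> zev golden ` set TR"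
proof -
  define w1 where "w1 = Rm a b c d (1,1,1)"
  define w2 where "w2 = Rm a b c d (1,-1,-1)"
  define w3 where "w3 = Rm a b c d (-1,1,-1)"
  obtain c1 where c1: "c1 \<in> set VL" "w1 = tev golden c1" using VL RV v1 w1_def by blast
  obtain c2 where c2: "c2 \<in> set VL" "w2 = tev golden c2" using VL RV v2 w2_def by blast
  obtain c3 where c3: "c3 \<in> set VL" "w3 = tev golden c3" using VL RV v3 w3_def by blast
  have m1: "zev golden (-1,0) = -1" by simp
  have d12: "dotc c1 c2 = (-1,0)"
    by (rule zev_inj_golden) (simp only: dotc_sound c1(2)[symmetric] c2(2)[symmetric] w1_def w2_def Rm_dot N m1, simp)
  have d13: "dotc c1 c3 = (-1,0)"
    by (rule zev_inj_golden) (simp only: dotc_sound c1(2)[symmetric] c3(2)[symmetric] w1_def w3_def Rm_dot N m1, simp)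
  have d23: "dotc c2 c3 = (-1,0)"
    by (rule zev_inj_golden) (simp only: dotc_sound c2(2)[symmetric] c3(2)[symmetric] w2_def w3_def Rm_dot N m1, simp)
  have dt: "detc c1 c2 c3 = (4,0)"
    by (rule zev_inj_golden) (simp only: detc_sound c1(2)[symmetric] c2(2)[symmetric] c3(2)[symmetric] w1_def w2_def w3_def Rm_det N, simp)
  have e4: "v4c c1 c2 c3 \<in> set (map (tscal (2,0)) VL)" if exx: ex
  proof -
    obtain c4 where c4: "c4 \<in> set VL" "Rm a b c d (golden, 0, golden - 1) = tev golden c4"
      using VL[OF RV[OF v4[OF exx]]] by blast
    have "tev golden (v4c c1 c2 c3) = tev golden (tscal (2,0) c4)"
      unfolding v4c_sound tscal2_sound c1(2)[symmetric] c2(2)[symmetric] c3(2)[symmetric] w1_def w2_def w3_def Rm_v4 c4(2) ..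
    then have "v4c c1 c2 c3 = tscal (2,0) c4" by (rule tev_inj_golden)
    then show ?thesis using c4(1) by simp
  qed
  have "trc c1 c2 c3 \<in> set TR"
    using chk c1(1) c2(1) c3(1) d12 d13 d23 dt e4 unfolding chkV_def by blast
  moreover have "zev golden (trc c1 c2 c3) = 8 * a^2 - 2"
    unfolding trc_sound c1(2)[symmetric] c2(2)[symmetric] c3(2)[symmetric] w1_def w2_def w3_def Rm_tr
    using N by (simp add: algebra_simps)
  ultimately show ?thesis by (metis image_eqI)
qed

lemma trace_form: "trace (mat2 (Complex a b) (Complex u w) (Complex (-u) w) (Complex a (-b))) = of_real (2 * a)"
  by (simp add: mat2_trace complex_eq_iff)

lemma preimage_Rm:
  assumes "A \<in> preimage_rot V" "A = mat2 (Complex a b) (Complex c d) (Complex (-c) d) (Complex a (-b))"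
    and "v \<in> V"
  shows "Rm a b c d v \<in> V"
proof -
  have "A ** emb3 v ** cadj A \<in> emb3 ` V" using assms unfolding preimage_rot_def by blast
  then obtain v' where "v' \<in> V" "emb3 (Rm a b c d v) = emb3 v'" using assms(2) conj_emb3 by auto
  then show ?thesis using emb3_inj by blast
qed

lemma sq_cases: "(x::real)^2 = k^2 \<Longrightarrow> x = k \<or> x = -k"
  using power2_eq_iff by blast

lemma trace_D:
  assumes "A \<in> Dgrp" shows "\<exists>c\<in>set TD. trace A = of_real (zev golden c)"
proof -
  have "A \<in> SU2" using assms preimage_rot_SU2 unfolding Dgrp_def by blast
  then obtain a b c d where A: "A = mat2 (Complex a b) (Complex c d) (Complex (-c) d) (Complex a (-b))"
    and N: "a^2 + b^2 + c^2 + d^2 = 1" by (rule SU2_form)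
  have "8 * a^2 - 2 \<in> zev golden ` set [(6,0),(0,2),(2,-2),(0,0),(-2,0)]"
  proof (rule rot_core[OF N _ vert_codes_dod _ _ _ v4 chkV_dod])
    show "\<And>v. v \<in> dodecahedron_vertices \<Longrightarrow> Rm a b c d v \<in> dodecahedron_vertices"
      using preimage_Rm assms A unfolding Dgrp_def by blast
  qed (use v123 cube_sub_dod in auto)
  then have "(2*a)^2 = 2^2 \<or> (2*a)^2 = golden^2 \<or> (2*a)^2 = (golden - 1)^2 \<or> (2*a)^2 = 1^2 \<or> (2*a)^2 = 0^2"
    using golden_sq by (auto simp: power2_eq_square algebra_simps)
  then have "2*a = 2 \<or> 2*a = -2 \<or> 2*a = golden \<or> 2*a = -golden \<or> 2*a = golden - 1 \<or> 2*a = -(golden - 1)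
     \<or> 2*a = 1 \<or> 2*a = -1 \<or> 2*a = 0"
    using sq_cases by (metis minus_zero)
  then have "\<exists>c\<in>set TD. 2*a = zev golden c"
    unfolding TD_def by (auto simp del: zev.simps simp: zev_codes(3,4,5,6,7)) (auto simp: golden_inv)
  then obtain cc where cc: "cc \<in> set TD" "2*a = zev golden cc" by blast
  have "trace A = of_real (2*a)" using A trace_form by simp
  then show ?thesis using cc by auto
qed

lemma trace_C:
  assumes "A \<in> Cgrp" shows "\<exists>c\<in>set TC. trace A = of_real (zev (sqrt 2) c)"
proof -
  have "A \<in> SU2" using assms preimage_rot_SU2 unfolding Cgrp_def by blast
  then obtain a b c d where A: "A = mat2 (Complex a b) (Complex c d) (Complex (-c) d) (Complex a (-b))"
    and N: "a^2 + b^2 + c^2 + d^2 = 1" by (rule SU2_form)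
  have "8 * a^2 - 2 \<in> zev golden ` set [(6,0),(2,0),(0,0),(-2,0)]"
  proof (rule rot_core[OF N _ vert_codes_cube v123 _ chkV_cube])
    show "\<And>v. v \<in> cube_vertices \<Longrightarrow> Rm a b c d v \<in> cube_vertices"
      using preimage_Rm assms A unfolding Cgrp_def by blast
  qed auto
  then have "(2*a)^2 = 2^2 \<or> (2*a)^2 = (sqrt 2)^2 \<or> (2*a)^2 = 1^2 \<or> (2*a)^2 = 0^2"
    by (auto simp: power2_eq_square algebra_simps)
  then have "2*a = 2 \<or> 2*a = -2 \<or> 2*a = sqrt 2 \<or> 2*a = - sqrt 2 \<or> 2*a = 1 \<or> 2*a = -1 \<or> 2*a = 0"
    using sq_cases by (metis minus_zero)
  then have "\<exists>c\<in>set TC. 2*a = zev (sqrt 2) c"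
    unfolding TC_def by auto
  then obtain cc where cc: "cc \<in> set TC" "2*a = zev (sqrt 2) cc" by blast
  have "trace A = of_real (2*a)" using A trace_form by simp
  then show ?thesis using cc by auto
qed

lemma list_all2_ex: "list_all2 P xs ys \<Longrightarrow> x \<in> set xs \<Longrightarrow> \<exists>y. P x y"
  by (induction rule: list_all2_induct) auto

lemma chkT_get:
  assumes "chkT m n T W C" "a \<in> set T" "b \<in> set T" "c \<in> set T"
  shows "\<exists>ct. valid m n T W (a,b,c) ct"
proof -
  obtain ca where ca: "list_all2 (\<lambda>b cb. list_all2 (\<lambda>c cc. valid m n T W (a,b,c) cc) T cb) T ca"
    using list_all2_ex[OF assms(1)[unfolded chkT_def] assms(2)] by blast
  obtain cb where cb: "list_all2 (\<lambda>c cc. valid m n T W (a,b,c) cc) T cb"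
    using list_all2_ex[OF ca assms(3)] by blast
  show ?thesis using list_all2_ex[OF cb assms(4)] by blast
qed

lemma main_generic:
  assumes sq: "w^2 = of_int m + of_int n * w" and inj: "\<And>a b. zev w a = zev w b \<Longrightarrow> a = b"
    and sub: "G \<subseteq> SU2" and cl: "\<And>A B. A \<in> G \<Longrightarrow> B \<in> G \<Longrightarrow> A ** B \<in> G"
    and tr: "\<And>A. A \<in> G \<Longrightarrow> \<exists>c\<in>set T. trace A = of_real (zev w c)"
    and chk: "chkT m n T W C"
    and E: "(x, y, z) \<in> Eset" and rep: "rep_class_in G (x, y, z)" and np: "\<not> rep_class_in Pin2 (x, y, z)"
  shows "\<exists>\<gamma>\<in>Gamma. \<exists>u\<in>set W. S_equiv (\<gamma> (x, y, z)) (tev w u)"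
proof -
  have inT: "x' \<in> zev w ` set T \<and> y' \<in> zev w ` set T \<and> z' \<in> zev w ` set T"
    if r: "rep_class_in G (x', y', z')" for x' y' z'
  proof -
    obtain A B where AB: "A \<in> G" "B \<in> G" "trace A = of_real x'" "trace B = of_real y'" "trace (A ** B) = of_real z'"
      using r unfolding rep_class_in_def by auto
    have "\<And>M t. M \<in> G \<Longrightarrow> trace M = of_real t \<Longrightarrow> t \<in> zev w ` set T"
    proof -
      fix M t assume "M \<in> G" "trace M = of_real t"
      then obtain c where "c \<in> set T" "of_real t = (of_real (zev w c) :: complex)" using tr by metis
      then show "t \<in> zev w ` set T" using of_real_eq_iff by blast
    qed
    then show ?thesis using AB cl by blast
  qed
  obtain ca where ca: "ca \<in> set T" "x = zev w ca" using inT[OF rep] by blast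
  obtain cb where cb: "cb \<in> set T" "y = zev w cb" using inT[OF rep] by blast
  obtain cc where cc: "cc \<in> set T" "z = zev w cc" using inT[OF rep] by blast
  have xyz: "(x, y, z) = tev w (ca, cb, cc)" using ca cb cc by simp
  obtain ct where v: "valid m n T W (ca, cb, cc) ct" using chkT_get[OF chk ca(1) cb(1) cc(1)] by blast
  show ?thesis
  proof (cases ct)
    case CPin
    then have p: "pinc m n (ca, cb, cc)" using v by simp
    have "x^2 + y^2 + z^2 - x*y*z - 2 = 2 \<or> (x = 0 \<and> y = 0) \<or> (x = 0 \<and> z = 0) \<or> (y = 0 \<and> z = 0)"
    proof -
      have k: "zev w (kapc m n (ca, cb, cc)) = x^2 + y^2 + z^2 - x*y*z - 2"
        using kapc_sound[OF sq] ca cb cc by simp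
      have z0: "zev w (0,0) = 0" by simp
      show ?thesis using p k z0 ca(2) cb(2) cc(2) by (auto simp del: zev.simps kapc.simps) (simp_all)
    qed
    then have "rep_class_in Pin2 (x, y, z)" using pin2_rep E by blast
    then show ?thesis using np by blast
  next
    case (CEsc bs)
    then have "escp m n T bs (ca, cb, cc)" using v by simp
    note e = this
    have clX: "\<And>t. rep_class_in G t \<Longrightarrow> rep_class_in G (tauX t)" using rep_tauX[OF sub] cl by blast
    have clY: "\<And>t. rep_class_in G t \<Longrightarrow> rep_class_in G (tauY t)" using rep_tauY[OF sub] cl by blast
    have "\<not> rep_class_in G (tev w (ca, cb, cc))"
      by (rule escp_sound[where P = "rep_class_in G", OF sq inj clX clY inT e])
    then have "\<not> rep_class_in G (x, y, z)" using xyz by simp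
    then show ?thesis using rep by blast
  next
    case (CR k i j l)
    then show ?thesis using valid_CR_sound[OF sq] v xyz by metis
  qed
qed

lemma zev_codes2: "zev golden (-1,1) = golden - 1" "zev golden (1,-1) = 1 - golden" "zev golden (0,1) = golden"
  "zev golden (0,-1) = -golden" "zev golden (1,0) = 1" "zev golden (-1,0) = -1" "zev golden (0,0) = 0"
  by simp_all

lemma rs_vals: "2 * ((sqrt 5 + 1) / 4) = golden" "-2 * ((sqrt 5 + 1) / 4) = -golden"
  "2 * ((sqrt 5 - 1) / 4) = golden - 1" "-2 * ((sqrt 5 - 1) / 4) = 1 - golden"
  by (simp_all add: golden_def field_simps)

lemma WD_targets:
  assumes "u \<in> set WD"
  shows "tev golden u \<in> {(sqrt 2, 1, sqrt 2), (1, 1, 1), (-2 * ((sqrt 5 - 1) / 4), 2 * ((sqrt 5 - 1) / 4), 2 * ((sqrt 5 - 1) / 4)),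
     (-2 * ((sqrt 5 - 1) / 4), -2 * ((sqrt 5 - 1) / 4), 1),
     (2 * ((sqrt 5 + 1) / 4), -2 * ((sqrt 5 + 1) / 4), -2 * ((sqrt 5 + 1) / 4)), (2 * ((sqrt 5 + 1) / 4), 1, 2 * ((sqrt 5 + 1) / 4)),
     (1, 2 * ((sqrt 5 + 1) / 4), 1), (1, 2 * ((sqrt 5 - 1) / 4), -1), (1, 2 * ((sqrt 5 + 1) / 4), 2 * ((sqrt 5 - 1) / 4))}"
  using assms unfolding rs_vals WD_def by (auto simp del: zev.simps simp: zev_codes2)

lemma WC_targets:
  assumes "u \<in> set WC"
  shows "tev (sqrt 2) u \<in> {(sqrt 2, 1, sqrt 2), (1, 1, 1)}"
  using assms unfolding WC_def by auto

theorem mainTheorem11: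
  fixes x y z :: real
  defines "r \<equiv> (sqrt 5 + 1) / 4" and "s \<equiv> (sqrt 5 - 1) / 4"
  assumes "(x, y, z) \<in> Eset"
    and "rep_class_in Cgrp (x, y, z) \<or> rep_class_in Dgrp (x, y, z)"
    and "\<not> rep_class_in Pin2 (x, y, z)"
  shows "\<exists>\<gamma>\<in>Gamma. \<exists>w \<in> {(sqrt 2, 1, sqrt 2), (1, 1, 1), (-2 * s, 2 * s, 2 * s), (-2 * s, -2 * s, 1),
            (2 * r, -2 * r, -2 * r), (2 * r, 1, 2 * r), (1, 2 * r, 1), (1, 2 * s, -1), (1, 2 * r, 2 * s)}.
            S_equiv (\<gamma> (x, y, z)) w"
proof -
  from assms(4) show ?thesis
  proof
    assume C: "rep_class_in Cgrp (x, y, z)"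
    have "\<exists>\<gamma>\<in>Gamma. \<exists>u\<in>set WC. S_equiv (\<gamma> (x, y, z)) (tev (sqrt 2) u)"
      by (rule main_generic[OF sqrt2_sq zev_inj_sqrt2 _ _ trace_C chkT_C assms(3) C assms(5)])
        (auto simp: Cgrp_def intro: preimage_rot_mult dest: preimage_rot_SU2[THEN subsetD])
    then show ?thesis using WC_targets by blast
  next
    assume D: "rep_class_in Dgrp (x, y, z)"
    have "\<exists>\<gamma>\<in>Gamma. \<exists>u\<in>set WD. S_equiv (\<gamma> (x, y, z)) (tev golden u)"
      by (rule main_generic[OF golden_sq zev_inj_golden _ _ trace_D chkT_D assms(3) D assms(5)])
        (auto simp: Dgrp_def intro: preimage_rot_mult dest: preimage_rot_SU2[THEN subsetD])
    then show ?thesis using WD_targets unfolding r_def s_def by blast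
  qed
qed

end
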